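(* Applying a normalisation rule (NR1 or NR2) to a TDD does not change the tensor it represents. Moreover, a TDD is normal if and only if no normalisation rule is applicable to it.
   Context: Fix a finite index set $I$ with a linear order $\prec$. Indices take values in $\{0,1\}$; a tensor over $I$ is a map $\{0,1\}^I\to\mathbb{C}$ (tensors over subsets of $I$ are regarded as tensors over $I$ not depending on the other indices). Each index $x$ is regarded as the tensor $x(c)=c$, and $\overline{x}(c):=1-c$; operations on tensors are pointwise. A TDD over $I$ is $\mathcal F=(V,E,index,value,low,high,w)$: a rooted directed acyclic graph with finite node set $V$ partitioned into non-terminal nodes $V_N$ and terminal nodes $V_T$, root $r_{\mathcal F}$; $index:V_N\to I$; $value:V_T\to\mathbb{C}$; $low,high:V_N\to V$; edges are the low-edges $(v,low(v))$ and high-edges $(v,high(v))$, $v\in V_N$, plus a unique source-less incoming edge $e_r$ of the root; $w$ gives each edge a complex weight and $w_{\mathcal F}:=w(e_r)$. Node tensors: $\Phi(v)=value(v)$ for terminal $v$; otherwise $\Phi(v)=w_0\overline{x_v}\Phi(low(v))+w_1x_v\Phi(high(v))$ with $x_v=index(v)$ and $w_0,w_1$ the low-/high-edge weights. The TDD represents $\Phi(\mathcal F):=w_{\mathcal F}\Phi(r_{\mathcal F})$. Normality (w.r.t. $\prec$): the pivot of a tensor $\phi$ is the lexicographically smallest (compare at the $\prec$-smallest differing index, $0<1$) $\vec a$ with $|\phi(\vec a)|=\max_{\vec b}|\phi(\vec b)|$; $\phi$ is normal if $\phi=0$ or $\phi$ equals $1$ at its pivot. A TDD is normal if $\Phi(v)$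 is normal for every node $v$. Normalisation rules. NR1: if $v$ is a terminal node with $value(v)\neq0$ and $value(v)\neq1$, set its value to $1$ and replace the weight $w$ of each incoming edge of $v$ by $value(v)\cdot w$. NR2: let $v$ be a non-terminal node such that $\Phi(v)\neq0$ is not normal but $\Phi(low(v))$ and $\Phi(high(v))$ are both normal, with low-/high-edge weights $w_0,w_1$. If $\Phi(low(v))\neq0$ and either $\Phi(high(v))=0$ or $|w_0|\ge|w_1|$, let $w:=w_0$; otherwise let $w:=w_1$. Divide $w_0$ and $w_1$ by $w$ and multiply the weight of each incoming edge of $v$ by $w$. *)

theory Defs
  imports Complex_Main
begin

text \<open>An assignment of values in {0,1} to the indices is a map 'i => bool
 (False = 0, True = 1).
 The finite linearly ordered index set I is the type 'i :: {finite, linorder}.\<close>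

type_synonym 'i tensor = "('i \<Rightarrow> bool) \<Rightarrow> complex"

definition idx_tensor :: "'i \<Rightarrow> 'i tensor" where
  "idx_tensor x = (\<lambda>c. if c x then 1 else 0)"

definition idx_bar_tensor :: "'i \<Rightarrow> 'i tensor" where
  "idx_bar_tensor x = (\<lambda>c. 1 - idx_tensor x c)"

definition lex_less :: "('i::linorder \<Rightarrow> bool) \<Rightarrow> ('i \<Rightarrow> bool) \<Rightarrow> bool" where
  "lex_less a b \<longleftrightarrow> (\<exists>i. \<not> a i \<and> b i \<and> (\<forall>j. j < i \<longrightarrow> a j = b j))"

definition max_abs :: "('i::finite) tensor \<Rightarrow> real" where
  "max_abs \<phi> = Max (range (\<lambda>b. cmod (\<phi> b)))"

definition pivot :: "('i::{finite,linorder}) tensor \<Rightarrow> ('i \<Rightarrow> bool)" where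
  "pivot \<phi> = (THE a. cmod (\<phi> a) = max_abs \<phi> \<and>
       (\<forall>b. cmod (\<phi> b) = max_abs \<phi> \<longrightarrow> b = a \<or> lex_less a b))"

definition normal_tensor :: "('i::{finite,linorder}) tensor \<Rightarrow> bool" where
  "normal_tensor \<phi> \<longleftrightarrow> \<phi> = (\<lambda>_. 0) \<or> \<phi> (pivot \<phi>) = 1"

text \<open>Nodes have type 'v. The low-edge of a non-terminal node v is identified with v
 (weight wlo v), likewise the high-edge (weight whi v); wroot is the weight of the
 source-less root edge.\<close>

record ('i, 'v) tdd =
  nodes :: "'v set"
  terms :: "'v set"
  root  :: 'v
  idx   :: "'v \<Rightarrow> 'i"
  val   :: "'v \<Rightarrow> complex"
  lo    :: "'v \<Rightarrow> 'v"
  hi    :: "'v \<Rightarrow> 'v"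
  wlo   :: "'v \<Rightarrow> complex"
  whi   :: "'v \<Rightarrow> complex"
  wroot :: complex

definition nonterms :: "('i, 'v) tdd \<Rightarrow> 'v set" where
  "nonterms F = nodes F - terms F"

definition edges :: "('i, 'v) tdd \<Rightarrow> ('v \<times> 'v) set" where
  "edges F = {(v, lo F v) | v. v \<in> nonterms F} \<union> {(v, hi F v) | v. v \<in> nonterms F}"

definition wf_tdd :: "('i, 'v) tdd \<Rightarrow> bool" where
  "wf_tdd F \<longleftrightarrow> finite (nodes F) \<and> terms F \<subseteq> nodes F \<and> root F \<in> nodes F
     \<and> (\<forall>v \<in> nonterms F. lo F v \<in> nodes F \<and> hi F v \<in> nodes F)
     \<and> acyclic (edges F)
     \<and> (\<forall>v \<in> nodes F. (root F, v) \<in> (edges F)\<^sup>*)"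

text \<open>Node tensors, computed by unfolding the recursive definition; on an acyclic graph
 with card V nodes every path has fewer than card V edges, so fuel card V suffices.\<close>
primrec phi_fuel :: "nat \<Rightarrow> ('i, 'v) tdd \<Rightarrow> 'v \<Rightarrow> 'i tensor" where
  "phi_fuel 0 F v = (\<lambda>_. val F v)"
| "phi_fuel (Suc n) F v =
     (if v \<in> terms F then (\<lambda>_. val F v)
      else (\<lambda>c. wlo F v * idx_bar_tensor (idx F v) c * phi_fuel n F (lo F v) c
               + whi F v * idx_tensor (idx F v) c * phi_fuel n F (hi F v) c))"

definition node_tensor :: "('i, 'v) tdd \<Rightarrow> 'v \<Rightarrow> 'i tensor" where
  "node_tensor F v = phi_fuel (card (nodes F)) F v"

definition rep :: "('i, 'v) tdd \<Rightarrow> 'i tensor" where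
  "rep F = (\<lambda>c. wroot F * node_tensor F (root F) c)"

definition normal_tdd :: "('i::{finite,linorder}, 'v) tdd \<Rightarrow> bool" where
  "normal_tdd F \<longleftrightarrow> (\<forall>v \<in> nodes F. normal_tensor (node_tensor F v))"

definition nr1_applicable :: "('i, 'v) tdd \<Rightarrow> 'v \<Rightarrow> bool" where
  "nr1_applicable F v \<longleftrightarrow> v \<in> terms F \<and> val F v \<noteq> 0 \<and> val F v \<noteq> 1"

definition nr1 :: "('i, 'v) tdd \<Rightarrow> 'v \<Rightarrow> ('i, 'v) tdd" where
  "nr1 F v = F\<lparr> val := (val F)(v := 1),
     wlo := (\<lambda>u. if u \<in> nonterms F \<and> lo F u = v then val F v * wlo F u else wlo F u),
     whi := (\<lambda>u. if u \<in> nonterms F \<and> hi F u = v then val F v * whi F u else whi F u),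
     wroot := (if root F = v then val F v * wroot F else wroot F) \<rparr>"

definition nr2_applicable :: "('i::{finite,linorder}, 'v) tdd \<Rightarrow> 'v \<Rightarrow> bool" where
  "nr2_applicable F v \<longleftrightarrow> v \<in> nonterms F
     \<and> node_tensor F v \<noteq> (\<lambda>_. 0) \<and> \<not> normal_tensor (node_tensor F v)
     \<and> normal_tensor (node_tensor F (lo F v)) \<and> normal_tensor (node_tensor F (hi F v))"

definition nr2_weight :: "('i, 'v) tdd \<Rightarrow> 'v \<Rightarrow> complex" where
  "nr2_weight F v =
     (if node_tensor F (lo F v) \<noteq> (\<lambda>_. 0) \<and>
         (node_tensor F (hi F v) = (\<lambda>_. 0) \<or> cmod (wlo F v) \<ge> cmod (whi F v))
      then wlo F v else whi F v)"

definition nr2 :: "('i, 'v) tdd \<Rightarrow> 'v \<Rightarrow> ('i, 'v) tdd" where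
  "nr2 F v = (let w = nr2_weight F v in F\<lparr>
     wlo := (\<lambda>u. (if u = v then wlo F u / w else wlo F u)
                 * (if u \<in> nonterms F \<and> lo F u = v then w else 1)),
     whi := (\<lambda>u. (if u = v then whi F u / w else whi F u)
                 * (if u \<in> nonterms F \<and> hi F u = v then w else 1)),
     wroot := (if root F = v then w * wroot F else wroot F) \<rparr>)"

end

theory Submission
  imports Defs
begin

lemma wf_fin: "wf_tdd F \<Longrightarrow> finite (nodes F)"
  unfolding wf_tdd_def by (elim conjE)

lemma wf_acyc: "wf_tdd F \<Longrightarrow> (x, x) \<notin> (edges F)\<^sup>+"
  unfolding wf_tdd_def acyclic_def by (elim conjE) (erule allE)

lemma wf_terms: "wf_tdd F \<Longrightarrow> u \<in> terms F \<Longrightarrow> u \<in> nodes F"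
  unfolding wf_tdd_def by (elim conjE) (erule subsetD)

lemma wf_root: "wf_tdd F \<Longrightarrow> root F \<in> nodes F"
  unfolding wf_tdd_def by (elim conjE)

lemma edges_sub: "wf_tdd F \<Longrightarrow> edges F \<subseteq> nodes F \<times> nodes F"
  unfolding wf_tdd_def edges_def nonterms_def by auto

lemma lo_edge: "u \<in> nonterms F \<Longrightarrow> (u, lo F u) \<in> edges F"
  unfolding edges_def by auto

lemma hi_edge: "u \<in> nonterms F \<Longrightarrow> (u, hi F u) \<in> edges F"
  unfolding edges_def by auto

lemma lo_node: "wf_tdd F \<Longrightarrow> u \<in> nonterms F \<Longrightarrow> lo F u \<in> nodes F"
  unfolding wf_tdd_def by auto

lemma hi_node: "wf_tdd F \<Longrightarrow> u \<in> nonterms F \<Longrightarrow> hi F u \<in> nodes F"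
  unfolding wf_tdd_def by auto

lemma wf_edges: "wf_tdd F \<Longrightarrow> wf ((edges F)\<inverse>)"
proof -
  assume a: "wf_tdd F"
  have "finite (nodes F \<times> nodes F)" using a unfolding wf_tdd_def by simp
  then have f: "finite (edges F)" using edges_sub[OF a] by (rule finite_subset[rotated])
  have "acyclic (edges F)" using a unfolding wf_tdd_def by simp
  then show ?thesis using finite_acyclic_wf_converse[OF f] by simp
qed

lemma desc_sub: "wf_tdd F \<Longrightarrow> (edges F)\<^sup>+ `` {u} \<subseteq> nodes F"
proof -
  assume a: "wf_tdd F"
  have "(edges F)\<^sup>+ \<subseteq> nodes F \<times> nodes F" using trancl_subset_Sigma[OF edges_sub[OF a]] .
  then show ?thesis by (auto simp: Image_def)
qed

lemma desc_finite: "wf_tdd F \<Longrightarrow> finite ((edges F)\<^sup>+ `` {u})"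
proof -
  assume a: "wf_tdd F"
  have "finite (nodes F)" using a unfolding wf_tdd_def by simp
  then show ?thesis using desc_sub[OF a] by (rule finite_subset[rotated])
qed

lemma card_desc_less:
  assumes a: "wf_tdd F" and e: "(u, c) \<in> edges F"
  shows "card ((edges F)\<^sup>+ `` {c}) < card ((edges F)\<^sup>+ `` {u})"
proof (rule psubset_card_mono[OF desc_finite[OF a]])
  have "(c, c) \<notin> (edges F)\<^sup>+" using wf_acyc[OF a] by blast
  moreover have "(u, c) \<in> (edges F)\<^sup>+" using e by blast
  moreover have "(edges F)\<^sup>+ `` {c} \<subseteq> (edges F)\<^sup>+ `` {u}" using e
    by (auto intro: trancl_into_trancl2)
  ultimately show "(edges F)\<^sup>+ `` {c} \<subset> (edges F)\<^sup>+ `` {u}" by blast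
qed

lemma card_desc_lt:
  assumes a: "wf_tdd F" and u: "u \<in> nodes F"
  shows "card ((edges F)\<^sup>+ `` {u}) < card (nodes F)"
proof -
  have "(u, u) \<notin> (edges F)\<^sup>+" using wf_acyc[OF a] by blast
  then have "(edges F)\<^sup>+ `` {u} \<subseteq> nodes F - {u}" using desc_sub[OF a] by blast
  moreover have "finite (nodes F)" using wf_fin[OF a] .
  ultimately have "card ((edges F)\<^sup>+ `` {u}) \<le> card (nodes F - {u})"
    by (simp add: card_mono)
  also have "\<dots> < card (nodes F)" using card_Diff1_less[of "nodes F" u] u \<open>finite (nodes F)\<close>
    by blast
  finally show ?thesis .
qed

lemma fuel_stable:
  assumes a: "wf_tdd F"
  shows "u \<in> nodes F \<Longrightarrow> card ((edges F)\<^sup>+ `` {u}) < n \<Longrightarrow> card ((edges F)\<^sup>+ `` {u}) < m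
     \<Longrightarrow> phi_fuel n F u = phi_fuel m F u"
proof (induction n arbitrary: u m)
  case 0
  then show ?case by simp
next
  case (Suc n)
  then obtain m' where m: "m = Suc m'" by (cases m) auto
  show ?case
  proof (cases "u \<in> terms F")
    case True
    then show ?thesis using m by simp
  next
    case False
    then have nt: "u \<in> nonterms F" using Suc.prems unfolding nonterms_def by blast
    have l1: "card ((edges F)\<^sup>+ `` {lo F u}) < card ((edges F)\<^sup>+ `` {u})"
      using card_desc_less[OF a lo_edge[OF nt]] .
    have h1: "card ((edges F)\<^sup>+ `` {hi F u}) < card ((edges F)\<^sup>+ `` {u})"
      using card_desc_less[OF a hi_edge[OF nt]] .
    have l2: "card ((edges F)\<^sup>+ `` {lo F u}) < n" "card ((edges F)\<^sup>+ `` {lo F u}) < m'"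
      using l1 Suc.prems m by auto
    have h2: "card ((edges F)\<^sup>+ `` {hi F u}) < n" "card ((edges F)\<^sup>+ `` {hi F u}) < m'"
      using h1 Suc.prems m by auto
    have "phi_fuel n F (lo F u) = phi_fuel m' F (lo F u)"
      using Suc.IH[OF lo_node[OF a nt] l2(1) l2(2)] .
    moreover have "phi_fuel n F (hi F u) = phi_fuel m' F (hi F u)"
      using Suc.IH[OF hi_node[OF a nt] h2(1) h2(2)] .
    ultimately show ?thesis using m False by simp
  qed
qed

lemma unfold_term:
  assumes a: "wf_tdd F" and u: "u \<in> terms F"
  shows "node_tensor F u = (\<lambda>_. val F u)"
proof -
  have "u \<in> nodes F" using wf_terms[OF a u] .
  then have "card (nodes F) > 0" using wf_fin[OF a] card_gt_0_iff by blast
  then obtain N where "card (nodes F) = Suc N" using gr0_implies_Suc by blast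
  then show ?thesis unfolding node_tensor_def using u by simp
qed

lemma unfold_nonterm:
  assumes a: "wf_tdd F" and u: "u \<in> nonterms F"
  shows "node_tensor F u = (\<lambda>c. wlo F u * idx_bar_tensor (idx F u) c * node_tensor F (lo F u) c
               + whi F u * idx_tensor (idx F u) c * node_tensor F (hi F u) c)"
proof -
  have un: "u \<in> nodes F" using u unfolding nonterms_def by blast
  have lt: "card ((edges F)\<^sup>+ `` {u}) < card (nodes F)" using card_desc_lt[OF a un] .
  then have "0 < card (nodes F)" by linarith
  then obtain N where N: "card (nodes F) = Suc N" using gr0_implies_Suc by blast
  have l1: "card ((edges F)\<^sup>+ `` {lo F u}) < card ((edges F)\<^sup>+ `` {u})"
    using card_desc_less[OF a lo_edge[OF u]] .
  have h1: "card ((edges F)\<^sup>+ `` {hi F u}) < card ((edges F)\<^sup>+ `` {u})"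
    using card_desc_less[OF a hi_edge[OF u]] .
  have "phi_fuel N F (lo F u) = phi_fuel (Suc N) F (lo F u)"
    by (rule fuel_stable[OF a lo_node[OF a u]]) (use l1 lt N in linarith)+
  moreover have "phi_fuel N F (hi F u) = phi_fuel (Suc N) F (hi F u)"
    by (rule fuel_stable[OF a hi_node[OF a u]]) (use h1 lt N in linarith)+
  moreover have "u \<notin> terms F" using u unfolding nonterms_def by blast
  ultimately show ?thesis unfolding node_tensor_def N by simp
qed


lemma nr1_struct[simp]: "nodes (nr1 F v) = nodes F" "terms (nr1 F v) = terms F"
  "lo (nr1 F v) = lo F" "hi (nr1 F v) = hi F" "idx (nr1 F v) = idx F" "root (nr1 F v) = root F"
  by (simp_all add: nr1_def)

lemma nr1_struct2[simp]: "nonterms (nr1 F v) = nonterms F" "edges (nr1 F v) = edges F"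
  by (simp_all add: nonterms_def edges_def)

lemma nr1_wf: "wf_tdd F \<Longrightarrow> wf_tdd (nr1 F v)"
  unfolding wf_tdd_def by simp

lemma nr2_struct[simp]: "nodes (nr2 F v) = nodes F" "terms (nr2 F v) = terms F"
  "lo (nr2 F v) = lo F" "hi (nr2 F v) = hi F" "idx (nr2 F v) = idx F" "root (nr2 F v) = root F"
  "val (nr2 F v) = val F"
  by (simp_all add: nr2_def Let_def)

lemma nr2_struct2[simp]: "nonterms (nr2 F v) = nonterms F" "edges (nr2 F v) = edges F"
  by (simp_all add: nonterms_def edges_def)

lemma nr2_wf: "wf_tdd F \<Longrightarrow> wf_tdd (nr2 F v)"
  unfolding wf_tdd_def by simp

lemma term_node: "wf_tdd F \<Longrightarrow> u \<in> terms F \<Longrightarrow> u \<in> nodes F"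
  by (rule wf_terms)

lemma nonterm_node: "u \<in> nonterms F \<Longrightarrow> u \<in> nodes F"
  unfolding nonterms_def by blast

lemma node_cases: "u \<in> nodes F \<Longrightarrow> u \<notin> terms F \<Longrightarrow> u \<in> nonterms F"
  unfolding nonterms_def by blast

lemma nr1_node:
  assumes a: "wf_tdd F" and v: "v \<in> terms F"
  shows "u \<in> nodes F \<Longrightarrow> node_tensor (nr1 F v) u = (if u = v then (\<lambda>_. 1) else node_tensor F u)"
proof (induction u rule: wf_induct_rule[OF wf_edges[OF a]])
  case (1 u)
  have a': "wf_tdd (nr1 F v)" using nr1_wf[OF a] .
  show ?case
  proof (cases "u \<in> terms F")
    case True
    then show ?thesis using unfold_term[OF a True] unfold_term[of "nr1 F v" u] a'
      by (simp add: nr1_def)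
  next
    case False
    have nt: "u \<in> nonterms F" using node_cases[OF "1.prems" False] .
    have uv: "u \<noteq> v" using False v by blast
    have L: "node_tensor (nr1 F v) (lo F u) = (if lo F u = v then (\<lambda>_. 1) else node_tensor F (lo F u))"
      using "1.IH"[OF _ lo_node[OF a nt]] lo_edge[OF nt] by simp
    have H: "node_tensor (nr1 F v) (hi F u) = (if hi F u = v then (\<lambda>_. 1) else node_tensor F (hi F u))"
      using "1.IH"[OF _ hi_node[OF a nt]] hi_edge[OF nt] by simp
    have V: "node_tensor F v = (\<lambda>_. val F v)" using unfold_term[OF a v] .
    show ?thesis
      unfolding unfold_nonterm[OF a' nr1_struct2(1)[symmetric, THEN subst, of "\<lambda>X. u \<in> X", OF nt]]
        unfold_nonterm[OF a nt]
      using L H V uv nt by (auto simp add: nr1_def)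
  qed
qed

lemma nr2_node:
  assumes a: "wf_tdd F" and v: "v \<in> nonterms F" and w: "nr2_weight F v \<noteq> 0"
  shows "u \<in> nodes F \<Longrightarrow> node_tensor (nr2 F v) u =
     (if u = v then (\<lambda>c. node_tensor F u c / nr2_weight F v) else node_tensor F u)"
proof (induction u rule: wf_induct_rule[OF wf_edges[OF a]])
  case (1 u)
  have a': "wf_tdd (nr2 F v)" using nr2_wf[OF a] .
  show ?case
  proof (cases "u \<in> terms F")
    case True
    have uv: "u \<noteq> v" using True v unfolding nonterms_def by blast
    then show ?thesis using unfold_term[OF a True] unfold_term[of "nr2 F v" u] a' True
      by simp
  next
    case False
    have nt: "u \<in> nonterms F" using node_cases[OF "1.prems" False] .
    have nt': "u \<in> nonterms (nr2 F v)" using nt by simp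
    have lu: "lo F u \<noteq> u" "hi F u \<noteq> u"
      using lo_edge[OF nt] hi_edge[OF nt] wf_acyc[OF a] by (metis r_into_trancl)+
    have L: "node_tensor (nr2 F v) (lo F u) = (if lo F u = v then (\<lambda>c. node_tensor F (lo F u) c / nr2_weight F v) else node_tensor F (lo F u))"
      using "1.IH"[OF _ lo_node[OF a nt]] lo_edge[OF nt] by simp
    have H: "node_tensor (nr2 F v) (hi F u) = (if hi F u = v then (\<lambda>c. node_tensor F (hi F u) c / nr2_weight F v) else node_tensor F (hi F u))"
      using "1.IH"[OF _ hi_node[OF a nt]] hi_edge[OF nt] by simp
    define W where "W = nr2_weight F v"
    have wl: "wlo (nr2 F v) u = (if u = v then wlo F u / W else wlo F u) * (if lo F u = v then W else 1)"
      using nt by (simp add: nr2_def Let_def W_def)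
    have wh: "whi (nr2 F v) u = (if u = v then whi F u / W else whi F u) * (if hi F u = v then W else 1)"
      using nt by (simp add: nr2_def Let_def W_def)
    have wW: "W \<noteq> 0" using w W_def by simp
    show ?thesis
    proof (cases "u = v")
      case True
      have "lo F u \<noteq> v" "hi F u \<noteq> v" using lu True by auto
      then have wl2: "wlo (nr2 F v) u = wlo F u / W" and wh2: "whi (nr2 F v) u = whi F u / W"
        and L2: "node_tensor (nr2 F v) (lo F u) = node_tensor F (lo F u)"
        and H2: "node_tensor (nr2 F v) (hi F u) = node_tensor F (hi F u)"
        using wl wh L H True by simp_all
      show ?thesis unfolding unfold_nonterm[OF a' nt'] unfold_nonterm[OF a nt] wl2 wh2 L2 H2
        using True wW L2 H2 by (simp add: fun_eq_iff add_divide_distrib W_def)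
    next
      case False
      have wl2: "wlo (nr2 F v) u * node_tensor (nr2 F v) (lo F u) c = wlo F u * node_tensor F (lo F u) c" for c
        using wl L False wW by (cases "lo F u = v") (simp_all add: W_def)
      have wh2: "whi (nr2 F v) u * node_tensor (nr2 F v) (hi F u) c = whi F u * node_tensor F (hi F u) c" for c
        using wh H False wW by (cases "hi F u = v") (simp_all add: W_def)
      have E1: "wlo (nr2 F v) u * idx_bar_tensor (idx F u) c * node_tensor (nr2 F v) (lo F u) c
          = wlo F u * idx_bar_tensor (idx F u) c * node_tensor F (lo F u) c" for c
        using wl2[of c] by (metis mult.commute mult.left_commute)
      have E2: "whi (nr2 F v) u * idx_tensor (idx F u) c * node_tensor (nr2 F v) (hi F u) c
          = whi F u * idx_tensor (idx F u) c * node_tensor F (hi F u) c" for c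
        using wh2[of c] by (metis mult.commute mult.left_commute)
      show ?thesis unfolding unfold_nonterm[OF a' nt'] unfold_nonterm[OF a nt]
        using False by (simp only: E1 E2 if_False nr2_struct)
    qed
  qed
qed

lemma nr2_weight_nz:
  assumes a: "wf_tdd F" and ap: "nr2_applicable F v"
  shows "nr2_weight F v \<noteq> 0"
proof
  assume w0: "nr2_weight F v = 0"
  have nt: "v \<in> nonterms F" and nz: "node_tensor F v \<noteq> (\<lambda>_. 0)"
    using ap unfolding nr2_applicable_def by auto
  note U = unfold_nonterm[OF a nt]
  have "node_tensor F v = (\<lambda>_. 0)"
  proof (cases "node_tensor F (lo F v) \<noteq> (\<lambda>_. 0) \<and>
         (node_tensor F (hi F v) = (\<lambda>_. 0) \<or> cmod (wlo F v) \<ge> cmod (whi F v))")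
    case True
    then have wl: "wlo F v = 0" using w0 unfolding nr2_weight_def by simp
    show ?thesis
    proof (cases "node_tensor F (hi F v) = (\<lambda>_. 0)")
      case True
      then show ?thesis using U wl by simp
    next
      case False
      then have "cmod (whi F v) \<le> 0" using True wl by simp
      then have "whi F v = 0" by simp
      then show ?thesis using U wl by simp
    qed
  next
    case False
    have "nr2_weight F v = whi F v" unfolding nr2_weight_def using False by (rule if_not_P)
    then have wh: "whi F v = 0" using w0 by simp
    have "\<not> cmod (wlo F v) < 0" by simp
    then have "node_tensor F (lo F v) = (\<lambda>_. 0)" using False wh by force
    then show ?thesis using U wh by simp
  qed
  then show False using nz by simp
qed

lemma const_normal: "normal_tensor (\<lambda>_. (c::complex)) \<longleftrightarrow> c = 0 \<or> c = 1"
  by (simp add: normal_tensor_def fun_eq_iff)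

theorem theorem1:
  fixes F :: "('i::{finite,linorder}, 'v) tdd"
  assumes "wf_tdd F"
  shows "(\<forall>v. nr1_applicable F v \<longrightarrow> rep (nr1 F v) = rep F)
       \<and> (\<forall>v. nr2_applicable F v \<longrightarrow> rep (nr2 F v) = rep F)
       \<and> (normal_tdd F \<longleftrightarrow> \<not> (\<exists>v. nr1_applicable F v \<or> nr2_applicable F v))"
proof (intro conjI allI impI)
  have a: "wf_tdd F" by fact
  have rn: "root F \<in> nodes F" using wf_root[OF a] .
  show "rep (nr1 F v) = rep F" if ap: "nr1_applicable F v" for v
  proof -
    have v: "v \<in> terms F" using ap unfolding nr1_applicable_def by blast
    have N: "node_tensor (nr1 F v) (root F) = (if root F = v then (\<lambda>_. 1) else node_tensor F (root F))"
      using nr1_node[OF a v rn] .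
    have R: "wroot (nr1 F v) = (if root F = v then val F v * wroot F else wroot F)"
      by (simp add: nr1_def)
    show ?thesis
    proof (cases "root F = v")
      case True
      then show ?thesis unfolding rep_def using N R unfold_term[OF a v] by (simp add: mult.commute)
    next
      case False
      then show ?thesis unfolding rep_def using N R by simp
    qed
  qed
  show "rep (nr2 F v) = rep F" if ap: "nr2_applicable F v" for v
  proof -
    have v: "v \<in> nonterms F" using ap unfolding nr2_applicable_def by blast
    have w: "nr2_weight F v \<noteq> 0" using nr2_weight_nz[OF a ap] .
    have N: "node_tensor (nr2 F v) (root F) = (if root F = v then (\<lambda>c. node_tensor F (root F) c / nr2_weight F v) else node_tensor F (root F))"
      using nr2_node[OF a v w rn] .
    have R: "wroot (nr2 F v) = (if root F = v then nr2_weight F v * wroot F else wroot F)"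
      by (simp add: nr2_def Let_def)
    show ?thesis
    proof (cases "root F = v")
      case True
      then show ?thesis unfolding rep_def using N R w by simp
    next
      case False
      then show ?thesis unfolding rep_def using N R by simp
    qed
  qed
  show "normal_tdd F \<longleftrightarrow> \<not> (\<exists>v. nr1_applicable F v \<or> nr2_applicable F v)"
  proof
    assume n: "normal_tdd F"
    show "\<not> (\<exists>v. nr1_applicable F v \<or> nr2_applicable F v)"
    proof
      assume "\<exists>v. nr1_applicable F v \<or> nr2_applicable F v"
      then obtain v where "nr1_applicable F v \<or> nr2_applicable F v" by blast
      then show False
      proof
        assume ap: "nr1_applicable F v"
        then have v: "v \<in> terms F" unfolding nr1_applicable_def by blast
        have "normal_tensor (node_tensor F v)" using n term_node[OF a v] unfolding normal_tdd_def by blast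
        then show False using ap unfolding unfold_term[OF a v] const_normal nr1_applicable_def by blast
      next
        assume ap: "nr2_applicable F v"
        then have v: "v \<in> nonterms F" unfolding nr2_applicable_def by blast
        have "normal_tensor (node_tensor F v)" using n nonterm_node[OF v] unfolding normal_tdd_def by blast
        then show False using ap unfolding nr2_applicable_def by blast
      qed
    qed
  next
    assume na: "\<not> (\<exists>v. nr1_applicable F v \<or> nr2_applicable F v)"
    have "u \<in> nodes F \<Longrightarrow> normal_tensor (node_tensor F u)" for u
    proof (induction u rule: wf_induct_rule[OF wf_edges[OF a]])
      case (1 u)
      show ?case
      proof (cases "u \<in> terms F")
        case True
        then have "val F u = 0 \<or> val F u = 1" using na unfolding nr1_applicable_def by blast
        then show ?thesis unfolding unfold_term[OF a True] const_normal .
      next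
        case False
        have nt: "u \<in> nonterms F" using node_cases[OF "1.prems" False] .
        have L: "normal_tensor (node_tensor F (lo F u))"
          using "1.IH"[OF _ lo_node[OF a nt]] lo_edge[OF nt] by simp
        have H: "normal_tensor (node_tensor F (hi F u))"
          using "1.IH"[OF _ hi_node[OF a nt]] hi_edge[OF nt] by simp
        show ?thesis
        proof (rule ccontr)
          assume nn: "\<not> normal_tensor (node_tensor F u)"
          then have "node_tensor F u \<noteq> (\<lambda>_. 0)" unfolding normal_tensor_def by blast
          then have "nr2_applicable F u" using nt nn L H unfolding nr2_applicable_def by blast
          then show False using na by blast
        qed
      qed
    qed
    then show "normal_tdd F" unfolding normal_tdd_def by blast
  qed
qed

end
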